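(* Let $P(y,dz)=\mathbb P(y+\zeta\in dz)$ be the transition kernel of a random walk $\{S_n\}$ on $\mathbb R$ with i.i.d. increments distributed as $\zeta$, let $s\in\mathbb R$, $\tau=\inf\{n\ge0:S_n>s\}$, let $v:\mathbb R\to(0,\infty)$ be measurable and $w(y)=\int v(z)P(y,dz)$, and let $\epsilon>0$. For a starting point $S_0=y\le s$ define $L=\mathbb 1_{\{\tau<\infty\}}\prod_{k=1}^\tau w(S_{k-1})/v(S_k)$. Assume $w(y)\in(0,\infty)$ for $y\le s$, and that there exist $\delta_1>0$ and a function $h:\mathbb R\to[\delta_1,\infty)$ with $$w(y)^{1+\epsilon}\int v(z)h(z)P(y,dz)\le h(y)v(y)^{2+\epsilon}\quad\text{for all }y\le s.$$ If moreover $h(z)\ge1$ and $v(z)\ge\delta_2$ for all $z>s$, for some $\delta_2>0$, then for every $y\le s$, $$\mathbb E_y[L^{1+\epsilon}]\le\delta_1^{-1}\delta_2^{-(2+\epsilon)}v(y)^{2+\epsilon}h(y),$$ where $\mathbb E_y$ denotes expectation under the original law of the random walk started at $y$. *)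

theory Defs
  imports "HOL-Probability.Probability"
begin

text \<open>A sample path is a sequence of increments
  \<open>\<omega> :: nat \<Rightarrow> real\<close>, distributed according to the infinite product
  \<open>PiM UNIV (\<lambda>_. Z)\<close>; the walk started at \<open>y\<close> is \<open>S_n = y + \<omega> 0 + ... + \<omega> (n-1)\<close>.\<close>

definition rw :: "real \<Rightarrow> (nat \<Rightarrow> real) \<Rightarrow> nat \<Rightarrow> real" where
  "rw y \<omega> n = y + (\<Sum>i<n. \<omega> i)"

definition path_measure :: "real measure \<Rightarrow> (nat \<Rightarrow> real) measure" where
  "path_measure Z = PiM UNIV (\<lambda>_::nat. Z)"

text \<open>Kernel integral \<open>\<integral> f(z) P(y,dz) = \<integral> f(y+x) Z(dx)\<close> (value in [0,\<infinity>]).\<close>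
definition kern_int :: "real measure \<Rightarrow> (real \<Rightarrow> real) \<Rightarrow> real \<Rightarrow> ennreal" where
  "kern_int Z f y = (\<integral>\<^sup>+ x. ennreal (f (y + x)) \<partial>Z)"

text \<open>\<open>w(y) = \<integral> v(z) P(y,dz)\<close>, used only where it is finite (y \<le> s).\<close>
definition wfun :: "real measure \<Rightarrow> (real \<Rightarrow> real) \<Rightarrow> real \<Rightarrow> real" where
  "wfun Z v y = enn2real (kern_int Z v y)"

text \<open>First passage time \<open>\<tau> = inf{n \<ge> 0. S_n > s}\<close>; meaningful when finite.\<close>
definition hit_time :: "real \<Rightarrow> real \<Rightarrow> (nat \<Rightarrow> real) \<Rightarrow> nat" where
  "hit_time s y \<omega> = (LEAST n. rw y \<omega> n > s)"

definition lr :: "real measure \<Rightarrow> (real \<Rightarrow> real) \<Rightarrow> real \<Rightarrow> real \<Rightarrow> (nat \<Rightarrow> real) \<Rightarrow> real" where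
  "lr Z v s y \<omega> =
     (if \<exists>n. rw y \<omega> n > s
      then (\<Prod>k\<in>{1..hit_time s y \<omega>}. wfun Z v (rw y \<omega> (k - 1)) / v (rw y \<omega> k))
      else 0)"

end

theory Submission
  imports Defs
begin
fun T :: "real measure \<Rightarrow> (real\<Rightarrow>real) \<Rightarrow> (real\<Rightarrow>real) \<Rightarrow> real \<Rightarrow> real \<Rightarrow> nat \<Rightarrow> real \<Rightarrow> (nat\<Rightarrow>real) \<Rightarrow> ennreal" where
  "T Z v h s e 0 y \<omega> = (if s < y then ennreal (v y powr (2+e) * h y) else 0)"
| "T Z v h s e (Suc n) y \<omega> = (if s < y then ennreal (v y powr (2+e) * h y)
     else ennreal ((wfun Z v y / v (y + \<omega> 0)) powr (1+e)) * T Z v h s e n (y + \<omega> 0) (\<lambda>i. \<omega> (Suc i)))"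

lemma wfun_meas:
  assumes "sets Z = sets borel" "prob_space Z" and [measurable]: "v \<in> borel_measurable borel"
  shows "wfun Z v \<in> borel_measurable borel"
proof -
  interpret prob_space Z by fact
  have [measurable]: "(\<lambda>(y,x). ennreal (v (y + x))) \<in> borel_measurable (borel \<Otimes>\<^sub>M Z)"
    by (subst measurable_cong_sets[OF sets_pair_measure_cong[OF refl assms(1)] refl]) measurable
  show ?thesis unfolding wfun_def kern_int_def by measurable
qed

lemma comp_meas:
  assumes "sets Z = sets borel"
  shows "(\<lambda>\<omega>. \<omega> i) \<in> borel_measurable (PiM UNIV (\<lambda>_::nat. Z))"
  by (metis measurable_cong_sets[OF refl assms] measurable_component_singleton UNIV_I)

lemma shift_meas:
  "(\<lambda>\<omega> i. \<omega> (Suc i)) \<in> measurable (PiM UNIV (\<lambda>_::nat. Z)) (PiM UNIV (\<lambda>_::nat. Z))"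
  by (rule measurable_PiM_single') (auto simp: space_PiM PiE_iff)

lemma T_meas:
  assumes "sets Z = sets borel" "prob_space Z" and [measurable]: "v \<in> borel_measurable borel" "h \<in> borel_measurable borel"
  shows "(\<lambda>(y,\<omega>). T Z v h s e n y \<omega>) \<in> borel_measurable (borel \<Otimes>\<^sub>M PiM UNIV (\<lambda>_::nat. Z))"
proof (induction n)
  case 0
  have ee: "(\<lambda>(y,\<omega>). T Z v h s e 0 y \<omega>) = (\<lambda>p. if s < fst p then ennreal (v (fst p) powr (2+e) * h (fst p)) else 0)"
    by (auto simp: fun_eq_iff)
  have "(\<lambda>p. if s < fst p then ennreal (v (fst p) powr (2+e) * h (fst p)) else 0) \<in> borel_measurable (borel \<Otimes>\<^sub>M PiM UNIV (\<lambda>_::nat. Z))"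
    by measurable
  then show ?case unfolding ee .
next
  case (Suc n)
  define TT where "TT = (\<lambda>(y,\<omega>). T Z v h s e n y \<omega>)"
  define W where "W = wfun Z v"
  have [measurable]: "TT \<in> borel_measurable (borel \<Otimes>\<^sub>M PiM UNIV (\<lambda>_::nat. Z))"
    using Suc unfolding TT_def .
  have [measurable]: "W \<in> borel_measurable borel" unfolding W_def by (rule wfun_meas[OF assms(1,2,3)])
  define SH where "SH = (\<lambda>(\<omega>::nat\<Rightarrow>real) i. \<omega> (Suc i))"
  define C0 where "C0 = (\<lambda>(\<omega>::nat\<Rightarrow>real). \<omega> 0)"
  have [measurable]: "SH \<in> measurable (PiM UNIV (\<lambda>_::nat. Z)) (PiM UNIV (\<lambda>_::nat. Z))"
    unfolding SH_def by (rule shift_meas)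
  have [measurable]: "C0 \<in> borel_measurable (PiM UNIV (\<lambda>_::nat. Z))"
    unfolding C0_def by (rule comp_meas[OF assms(1)])
  have ee: "(\<lambda>(y,\<omega>). T Z v h s e (Suc n) y \<omega>) = (\<lambda>p. if s < fst p then ennreal (v (fst p) powr (2+e) * h (fst p))
     else ennreal ((W (fst p) / v (fst p + C0 (snd p))) powr (1+e)) * 
      TT (fst p + C0 (snd p), SH (snd p)))"
    by (auto simp: fun_eq_iff TT_def W_def SH_def C0_def)
  have m1: "(\<lambda>p. fst p + C0 (snd p)) \<in> borel_measurable (borel \<Otimes>\<^sub>M PiM UNIV (\<lambda>_::nat. Z))"
    by measurable
  have m2: "(\<lambda>p. SH (snd p)) \<in> measurable (borel \<Otimes>\<^sub>M PiM UNIV (\<lambda>_::nat. Z)) (PiM UNIV (\<lambda>_::nat. Z))"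
    by measurable
  have m3: "(\<lambda>p. TT (fst p + C0 (snd p), SH (snd p))) \<in> borel_measurable (borel \<Otimes>\<^sub>M PiM UNIV (\<lambda>_::nat. Z))"
    using measurable_compose[OF measurable_Pair[OF m1 m2], of TT borel] by simp
  have m4: "(\<lambda>p. ennreal ((W (fst p) / v (fst p + C0 (snd p))) powr (1+e))) \<in> borel_measurable (borel \<Otimes>\<^sub>M PiM UNIV (\<lambda>_::nat. Z))"
    using m1 by measurable
  have "(\<lambda>p. if s < fst p then ennreal (v (fst p) powr (2+e) * h (fst p))
     else ennreal ((W (fst p) / v (fst p + C0 (snd p))) powr (1+e)) * 
      TT (fst p + C0 (snd p), SH (snd p))) \<in> borel_measurable (borel \<Otimes>\<^sub>M PiM UNIV (\<lambda>_::nat. Z))"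
    using m3 m4 by measurable
  then show ?case unfolding ee .
qed

lemma (in prob_space) nn_integral_PiM_iter:
  assumes [measurable]: "f \<in> borel_measurable (PiM UNIV (\<lambda>_::nat. M))"
  shows "(\<integral>\<^sup>+\<omega>. f \<omega> \<partial>PiM UNIV (\<lambda>_::nat. M)) = (\<integral>\<^sup>+x. (\<integral>\<^sup>+\<omega>. f (case_nat x \<omega>) \<partial>PiM UNIV (\<lambda>_::nat. M)) \<partial>M)"
proof -
  interpret S: sequence_space M ..
  interpret P: pair_sigma_finite M "\<Pi>\<^sub>M i::nat\<in>UNIV. M" ..
  have "(\<integral>\<^sup>+X. f X \<partial>S.S) = (\<integral>\<^sup>+X. f ((\<lambda>(s, \<omega>). case_nat s \<omega>) X) \<partial>(M \<Otimes>\<^sub>M S.S))"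
    by (subst S.PiM_iter[symmetric]) (simp add: nn_integral_distr)
  also have "\<dots> = (\<integral>\<^sup>+x. \<integral>\<^sup>+X. f ((\<lambda>(s, \<omega>). case_nat s \<omega>) (x, X)) \<partial>S.S \<partial>M)"
    by (subst S.nn_integral_fst) simp_all
  finally show ?thesis by simp
qed

lemma T_mono: "T Z v h s e n y \<omega> \<le> T Z v h s e (Suc n) y \<omega>"
proof (induction n arbitrary: y \<omega>)
  case 0 then show ?case by simp
next
  case (Suc n)
  show ?case using Suc[of "y + \<omega> 0" "\<lambda>i. \<omega> (Suc i)"]
    by (auto intro: mult_left_mono simp del: T.simps(2) simp: T.simps(2)[of _ _ _ _ _ "Suc n"] T.simps(2)[of _ _ _ _ _ n])
qed

lemma rw_shift: "rw (y + \<omega> 0) (\<lambda>i. \<omega> (Suc i)) m = rw y \<omega> (Suc m)"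
  unfolding rw_def by (simp only: sum.lessThan_Suc_shift add.assoc)

lemma rw_0: "rw y \<omega> 0 = y" unfolding rw_def by simp

lemma T_hit:
  assumes vpos: "\<forall>z. v z > 0"
  shows "s < rw y \<omega> n \<Longrightarrow> (\<forall>m<n. rw y \<omega> m \<le> s) \<Longrightarrow>
    T Z v h s e n y \<omega> = ennreal ((\<Prod>k\<in>{1..n}. wfun Z v (rw y \<omega> (k - 1)) / v (rw y \<omega> k)) powr (1+e))
      * ennreal (v (rw y \<omega> n) powr (2+e) * h (rw y \<omega> n))"
proof (induction n arbitrary: y \<omega>)
  case 0
  then show ?case by (simp add: rw_0)
next
  case (Suc n)
  define y' where "y' = y + \<omega> 0"
  define \<omega>' where "\<omega>' = (\<lambda>i. \<omega> (Suc i))"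
  have rs: "rw y' \<omega>' m = rw y \<omega> (Suc m)" for m unfolding y'_def \<omega>'_def by (rule rw_shift)
  have ys: "\<not> s < y" using Suc.prems(2)[rule_format, of 0] by (simp add: rw_0)
  have IH: "T Z v h s e n y' \<omega>' = ennreal ((\<Prod>k\<in>{1..n}. wfun Z v (rw y' \<omega>' (k - 1)) / v (rw y' \<omega>' k)) powr (1+e))
      * ennreal (v (rw y' \<omega>' n) powr (2+e) * h (rw y' \<omega>' n))"
    using Suc.prems by (intro Suc.IH) (auto simp: rs)
  define f where "f k = wfun Z v (rw y \<omega> (k - 1)) / v (rw y \<omega> k)" for k
  have fnn: "f k \<ge> 0" for k unfolding f_def wfun_def using vpos by (simp add: less_imp_le)
  have P: "(\<Prod>k\<in>{1..Suc n}. f k) = f 1 * (\<Prod>k\<in>{1..n}. wfun Z v (rw y' \<omega>' (k - 1)) / v (rw y' \<omega>' k))"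
  proof -
    have "(\<Prod>k\<in>{1..Suc n}. f k) = (\<Prod>k\<in>{0..n}. f (Suc k))"
      using prod.shift_bounds_cl_Suc_ivl[of f 0 n] by simp
    also have "\<dots> = f 1 * (\<Prod>k\<in>{1..n}. f (Suc k))"
      by (subst prod.atLeast_Suc_atMost) simp_all
    also have "(\<Prod>k\<in>{1..n}. f (Suc k)) = (\<Prod>k\<in>{1..n}. wfun Z v (rw y' \<omega>' (k - 1)) / v (rw y' \<omega>' k))"
      by (intro prod.cong) (auto simp: f_def rs)
    finally show ?thesis .
  qed
  have Pnn: "(\<Prod>k\<in>{1..n}. wfun Z v (rw y' \<omega>' (k - 1)) / v (rw y' \<omega>' k)) \<ge> 0"
    using vpos by (auto simp: wfun_def intro!: prod_nonneg divide_nonneg_pos)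
  have f1: "f 1 = wfun Z v y / v y'" unfolding f_def y'_def by (simp add: rw_def)
  have "T Z v h s e (Suc n) y \<omega> = ennreal ((wfun Z v y / v y') powr (1+e)) * T Z v h s e n y' \<omega>'"
    using ys by (simp add: y'_def \<omega>'_def)
  also have "\<dots> = ennreal ((\<Prod>k\<in>{1..Suc n}. f k) powr (1+e)) * ennreal (v (rw y \<omega> (Suc n)) powr (2+e) * h (rw y \<omega> (Suc n)))"
    unfolding IH P f1[symmetric] rs using fnn[of 1] Pnn
    by (simp add: powr_mult ennreal_mult mult.assoc)
  finally show ?case unfolding f_def .
qed


lemma T_bound:
  fixes Z :: "real measure" and v h :: "real \<Rightarrow> real" and s e :: real
  assumes Z_prob: "prob_space Z" and Z_sets: "sets Z = sets borel"
    and v_meas: "v \<in> borel_measurable borel" and v_pos: "\<forall>z. v z > 0"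
    and h_pos: "\<forall>z. h z \<ge> 0"
    and h_meas: "h \<in> borel_measurable borel"
    and lyap: "\<forall>x\<le>s. ennreal (wfun Z v x powr (1 + e)) * kern_int Z (\<lambda>z. v z * h z) x
                      \<le> ennreal (h x * v x powr (2 + e))"
  shows "(\<integral>\<^sup>+\<omega>. T Z v h s e n y \<omega> \<partial>PiM UNIV (\<lambda>_::nat. Z)) \<le> ennreal (v y powr (2+e) * h y)"
proof (induction n arbitrary: y)
  interpret Zp: prob_space Z by fact
  have SP: "prob_space (PiM UNIV (\<lambda>_::nat. Z))" by (rule prob_space_PiM) (rule Z_prob)
  have Tm: "(\<lambda>\<omega>. T Z v h s e n y \<omega>) \<in> borel_measurable (PiM UNIV (\<lambda>_::nat. Z))" for n y
    using measurable_Pair2[OF T_meas[OF Z_sets Z_prob v_meas h_meas, of s e n], of y] by simp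
  have above: "(\<integral>\<^sup>+\<omega>. T Z v h s e n y \<omega> \<partial>PiM UNIV (\<lambda>_::nat. Z)) = ennreal (v y powr (2+e) * h y)"
    if "s < y" for n y
  proof -
    have "(\<integral>\<^sup>+\<omega>. T Z v h s e n y \<omega> \<partial>PiM UNIV (\<lambda>_::nat. Z)) = (\<integral>\<^sup>+\<omega>. ennreal (v y powr (2+e) * h y) \<partial>PiM UNIV (\<lambda>_::nat. Z))"
      using that by (intro nn_integral_cong) (cases n, auto)
    also have "\<dots> = ennreal (v y powr (2+e) * h y)"
      using prob_space.emeasure_space_1[OF SP] by simp
    finally show ?thesis .
  qed
  {
    case 0
    show ?case
    proof (cases "s < y")
      case True show ?thesis unfolding above[OF True] by simp
    next
      case False then show ?thesis by simp
    qed
  next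
    case (Suc n)
    show ?case
    proof (cases "s < y")
      case True show ?thesis unfolding above[OF True] by simp
    next
      case False
      define g where "g x = ennreal ((wfun Z v y / v (y + x)) powr (1+e))" for x
      have "(\<integral>\<^sup>+\<omega>. T Z v h s e (Suc n) y \<omega> \<partial>PiM UNIV (\<lambda>_::nat. Z))
          = (\<integral>\<^sup>+x. (\<integral>\<^sup>+\<omega>. T Z v h s e (Suc n) y (case_nat x \<omega>) \<partial>PiM UNIV (\<lambda>_::nat. Z)) \<partial>Z)"
        by (rule Zp.nn_integral_PiM_iter[OF Tm])
      also have "\<dots> = (\<integral>\<^sup>+x. (\<integral>\<^sup>+\<omega>. g x * T Z v h s e n (y + x) \<omega> \<partial>PiM UNIV (\<lambda>_::nat. Z)) \<partial>Z)"
        using False by (simp add: g_def)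
      also have "\<dots> = (\<integral>\<^sup>+x. g x * (\<integral>\<^sup>+\<omega>. T Z v h s e n (y + x) \<omega> \<partial>PiM UNIV (\<lambda>_::nat. Z)) \<partial>Z)"
        by (intro nn_integral_cong nn_integral_cmult Tm)
      also have "\<dots> \<le> (\<integral>\<^sup>+x. g x * ennreal (v (y+x) powr (2+e) * h (y+x)) \<partial>Z)"
        by (intro nn_integral_mono mult_left_mono Suc) simp
      also have "\<dots> = (\<integral>\<^sup>+x. ennreal (wfun Z v y powr (1+e)) * ennreal (v (y+x) * h (y+x)) \<partial>Z)"
      proof (intro nn_integral_cong)
        fix x
        have w0: "wfun Z v y \<ge> 0" unfolding wfun_def by simp
        have vp: "v (y+x) > 0" using v_pos by simp
        have hp: "h (y+x) \<ge> 0" using h_pos by simp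
        have "(wfun Z v y / v (y + x)) powr (1+e) * (v (y+x) powr (2+e) * h (y+x))
            = wfun Z v y powr (1+e) * (v (y+x) * h (y+x))"
        proof -
          have "v (y+x) powr (2+e) = v (y+x) powr (1+e) * v (y+x)"
            using powr_add[of "v (y+x)" "1+e" 1] vp by simp
          moreover have "v (y+x) powr (1+e) > 0" using vp by simp
          ultimately show ?thesis using w0 vp by (simp add: powr_divide field_simps)
        qed
        then show "g x * ennreal (v (y+x) powr (2+e) * h (y+x)) = ennreal (wfun Z v y powr (1+e)) * ennreal (v (y+x) * h (y+x))"
          unfolding g_def using vp hp w0
          by (simp add: ennreal_mult[symmetric])
      qed
      also have "\<dots> = ennreal (wfun Z v y powr (1+e)) * kern_int Z (\<lambda>z. v z * h z) y"
      proof -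
        have "(\<lambda>x. ennreal (v (y+x) * h (y+x))) \<in> borel_measurable Z"
          by (subst measurable_cong_sets[OF Z_sets refl]) (use v_meas h_meas in measurable)
        then show ?thesis unfolding kern_int_def by (rule nn_integral_cmult)
      qed
      also have "\<dots> \<le> ennreal (h y * v y powr (2 + e))"
        using lyap False by simp
      finally show ?thesis by (simp add: mult.commute)
    qed
  }
qed

theorem proposition2:
  fixes Z :: "real measure" and v h :: "real \<Rightarrow> real"
    and s \<epsilon> \<delta>1 \<delta>2 y :: real
  assumes Z_prob: "prob_space Z" and Z_sets: "sets Z = sets borel"
    and v_meas: "v \<in> borel_measurable borel" and v_pos: "\<forall>z. v z > 0"
    and eps: "\<epsilon> > 0"
    and w_fin: "\<forall>x\<le>s. 0 < kern_int Z v x \<and> kern_int Z v x < \<infinity>"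
    and d1: "\<delta>1 > 0" and h_lb: "\<forall>z. h z \<ge> \<delta>1"
    and h_meas: "h \<in> borel_measurable borel"
    and lyap: "\<forall>x\<le>s. ennreal (wfun Z v x powr (1 + \<epsilon>)) * kern_int Z (\<lambda>z. v z * h z) x
                      \<le> ennreal (h x * v x powr (2 + \<epsilon>))"
    and h_above: "\<forall>z>s. h z \<ge> 1"
    and d2: "\<delta>2 > 0" and v_above: "\<forall>z>s. v z \<ge> \<delta>2"
    and y: "y \<le> s"
  shows "(\<integral>\<^sup>+ \<omega>. ennreal (lr Z v s y \<omega> powr (1 + \<epsilon>)) \<partial>path_measure Z)
           \<le> ennreal (inverse \<delta>1 * \<delta>2 powr (-(2 + \<epsilon>)) * v y powr (2 + \<epsilon>) * h y)"
proof -
  let ?S = "PiM UNIV (\<lambda>_::nat. Z)"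
  have Tm: "(\<lambda>\<omega>. T Z v h s \<epsilon> n y \<omega>) \<in> borel_measurable ?S" for n
    using measurable_Pair2[OF T_meas[OF Z_sets Z_prob v_meas h_meas, of s \<epsilon> n], of y] by simp
  have h_pos: "\<forall>z. h z \<ge> 0"
  proof
    fix z have "h z \<ge> \<delta>1" using h_lb by blast
    then show "h z \<ge> 0" using d1 by linarith
  qed
  define c where "c = inverse \<delta>1 * \<delta>2 powr (-(2 + \<epsilon>))"
  have c0: "c \<ge> 0" unfolding c_def using d1 by simp
  have pw: "ennreal (lr Z v s y \<omega> powr (1 + \<epsilon>)) \<le> ennreal c * (SUP n. T Z v h s \<epsilon> n y \<omega>)" for \<omega>
  proof (cases "\<exists>n. rw y \<omega> n > s")
    case False then show ?thesis by (simp add: lr_def)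
  next
    case True
    define N where "N = hit_time s y \<omega>"
    have hN: "s < rw y \<omega> N" unfolding N_def hit_time_def using True by (rule LeastI_ex)
    have bN: "\<forall>m<N. rw y \<omega> m \<le> s" unfolding N_def hit_time_def using not_less_Least[where P="\<lambda>n. s < rw y \<omega> n"] by (auto simp: not_less)
    define P where "P = (\<Prod>k\<in>{1..N}. wfun Z v (rw y \<omega> (k - 1)) / v (rw y \<omega> k))"
    have lrP: "lr Z v s y \<omega> = P" unfolding lr_def P_def N_def using True by simp
    have Pnn: "P \<ge> 0" unfolding P_def
      using v_pos by (auto simp: wfun_def intro!: prod_nonneg divide_nonneg_pos)
    define q where "q = v (rw y \<omega> N) powr (2+\<epsilon>) * h (rw y \<omega> N)"
    have TN: "T Z v h s \<epsilon> N y \<omega> = ennreal (P powr (1+\<epsilon>)) * ennreal q"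
      unfolding P_def q_def by (rule T_hit[OF v_pos hN bN])
    have qb: "q \<ge> \<delta>2 powr (2+\<epsilon>) * \<delta>1"
      unfolding q_def
    proof (rule mult_mono)
      show "\<delta>2 powr (2 + \<epsilon>) \<le> v (rw y \<omega> N) powr (2 + \<epsilon>)"
        using v_above hN d2 eps by (intro powr_mono2) auto
    qed (use h_lb d1 d2 v_pos in auto)
    have cq: "c * q \<ge> 1"
    proof -
      have pp: "\<delta>2 powr (-(2 + \<epsilon>)) * \<delta>2 powr (2+\<epsilon>) = 1"
        using powr_add[of \<delta>2 "-(2 + \<epsilon>)" "2+\<epsilon>", symmetric] d2 by simp
      have "c * (\<delta>2 powr (2+\<epsilon>) * \<delta>1) = (inverse \<delta>1 * \<delta>1) * (\<delta>2 powr (-(2 + \<epsilon>)) * \<delta>2 powr (2+\<epsilon>))"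
        unfolding c_def by (simp only: ac_simps)
      also have "\<dots> = 1" using pp d1 by simp
      finally have "c * (\<delta>2 powr (2+\<epsilon>) * \<delta>1) = 1" .
      moreover have "c * (\<delta>2 powr (2+\<epsilon>) * \<delta>1) \<le> c * q" using qb c0 by (rule mult_left_mono)
      ultimately show ?thesis by simp
    qed
    have qnn: "q \<ge> 0" unfolding q_def using v_pos h_pos by simp
    have "ennreal (lr Z v s y \<omega> powr (1 + \<epsilon>)) = ennreal (P powr (1+\<epsilon>))" by (simp add: lrP)
    also have "\<dots> \<le> ennreal (c * (P powr (1+\<epsilon>) * q))"
    proof (rule ennreal_leI)
      have "P powr (1+\<epsilon>) * 1 \<le> P powr (1+\<epsilon>) * (c * q)" using cq by (intro mult_left_mono) auto
      then show "P powr (1+\<epsilon>) \<le> c * (P powr (1+\<epsilon>) * q)" by (simp add: ac_simps)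
    qed
    also have "\<dots> = ennreal c * T Z v h s \<epsilon> N y \<omega>"
      unfolding TN using c0 qnn by (simp add: ennreal_mult)
    also have "\<dots> \<le> ennreal c * (SUP n. T Z v h s \<epsilon> n y \<omega>)"
      by (intro mult_left_mono SUP_upper) auto
    finally show ?thesis .
  qed
  have inc: "incseq (\<lambda>n \<omega>. T Z v h s \<epsilon> n y \<omega>)"
    by (intro incseq_SucI le_funI T_mono)
  have "(\<integral>\<^sup>+ \<omega>. ennreal (lr Z v s y \<omega> powr (1 + \<epsilon>)) \<partial>path_measure Z)
      \<le> (\<integral>\<^sup>+ \<omega>. ennreal c * (SUP n. T Z v h s \<epsilon> n y \<omega>) \<partial>?S)"
    unfolding path_measure_def by (intro nn_integral_mono pw)
  also have "\<dots> = ennreal c * (\<integral>\<^sup>+ \<omega>. (SUP n. T Z v h s \<epsilon> n y \<omega>) \<partial>?S)"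
    by (intro nn_integral_cmult) (use Tm in measurable)
  also have "(\<integral>\<^sup>+ \<omega>. (SUP n. T Z v h s \<epsilon> n y \<omega>) \<partial>?S) = (SUP n. \<integral>\<^sup>+ \<omega>. T Z v h s \<epsilon> n y \<omega> \<partial>?S)"
    using nn_integral_monotone_convergence_SUP[OF inc Tm] by simp
  also have "\<dots> \<le> ennreal (v y powr (2+\<epsilon>) * h y)"
    by (intro SUP_least T_bound[OF Z_prob Z_sets v_meas v_pos h_pos h_meas lyap])
  also have "ennreal c * ennreal (v y powr (2+\<epsilon>) * h y) = ennreal (inverse \<delta>1 * \<delta>2 powr (-(2 + \<epsilon>)) * v y powr (2 + \<epsilon>) * h y)"
    using c0 h_pos by (simp add: c_def ennreal_mult[symmetric] mult.assoc)
  finally show ?thesis by (simp add: mult_left_mono)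
qed

end
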